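(* Let $N$ be a positive integer, $\alpha>1$, and suppose $(L_1,\ldots,L_K)\in\mathrm{TFF}(\alpha,N)$. Let $\tilde N=\sum_{i=1}^K L_i-N$ and $\tilde\alpha=\alpha/(\alpha-1)=\alpha N/\tilde N$. Then $(L_1,\ldots,L_K)\in\mathrm{TFF}(\tilde\alpha,\tilde N)$.
   Context: For a positive integer $N$, $\mathrm{TFF}(\alpha,N)$ is the set of weakly decreasing sequences of positive integers $(L_1,\ldots,L_K)$ such that there exist orthogonal projections $P_1,\ldots,P_K$ on $\mathbb{R}^N$ with $\operatorname{rank}P_i=L_i$ and $\sum_{i=1}^K P_i=\alpha\mathbf I$ (necessarily $\alpha=\sum_i L_i/N$). *)

theory Defs
  imports "Jordan_Normal_Form.DL_Rank"
begin

definition mat_sum :: "nat \<Rightarrow> (nat \<Rightarrow> real mat) \<Rightarrow> nat \<Rightarrow> real mat" where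
  "mat_sum n P K = foldr (+) (map P [0..<K]) (0\<^sub>m n n)"

definition orth_proj :: "nat \<Rightarrow> real mat \<Rightarrow> bool" where
  "orth_proj n P \<longleftrightarrow> P \<in> carrier_mat n n \<and> P * P = P \<and> transpose_mat P = P"

definition TFF :: "real \<Rightarrow> nat \<Rightarrow> nat list set" where
  "TFF \<alpha> N = {Ls. sorted_wrt (\<ge>) Ls \<and> (\<forall>L\<in>set Ls. 0 < L) \<and>
     (\<exists>P. (\<forall>i<length Ls. orth_proj N (P i) \<and> vec_space.rank N (P i) = Ls ! i) \<and>
          mat_sum N P (length Ls) = \<alpha> \<cdot>\<^sub>m 1\<^sub>m N)}"

end

theory Submission
  imports Defs "Jordan_Normal_Form.Gram_Schmidt"
begin


lemma orth_proj_factor: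
  fixes P :: "real mat"
  assumes "orth_proj n P"
  shows "\<exists>U. U \<in> carrier_mat n (vec_space.rank n P) \<and> transpose_mat U * U = 1\<^sub>m (vec_space.rank n P)
     \<and> U * transpose_mat U = P"
proof -
  interpret vec_space "TYPE(real)" n .
  have P: "P \<in> carrier_mat n n" "P * P = P" "P\<^sup>T = P" using assms unfolding orth_proj_def by auto
  have colsC: "set (cols P) \<subseteq> carrier_vec n" using P(1) cols_dim by blast
  obtain S where S: "maximal S (\<lambda>T. T \<subseteq> set (cols P) \<and> lin_indpt T)"
    using maximal_exists[of "(\<lambda>T. T \<subseteq> set (cols P) \<and> lin_indpt T)" "card (set (cols P))" "{}"]
    by (meson List.finite_set card_mono empty_iff empty_subsetI finite_lin_indpt2 rev_finite_subset)
  have rk: "rank P = card S" by (rule rank_card_indpt[OF P(1) S])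
  have SC: "S \<subseteq> set (cols P)" "lin_indpt S" using S unfolding maximal_def by auto
  have finS: "finite S" using SC(1) finite_subset by blast
  have SCv: "S \<subseteq> carrier_vec n" using SC colsC by blast
  have spanS: "set (cols P) \<subseteq> span S"
  proof
    fix s assume s: "s \<in> set (cols P)"
    show "s \<in> span S"
    proof (cases "s \<in> S")
      case True then show ?thesis using in_own_span[OF SCv] by blast
    next
      case False
      show ?thesis
      proof (rule ccontr)
        assume ns: "s \<notin> span S"
        have sC: "s \<in> carrier_vec n" using s colsC by blast
        have "lin_indpt (S \<union> {s})" using lin_dep_iff_in_span[OF SCv SC(2) sC False] ns by simp
        moreover have "S \<union> {s} \<subseteq> set (cols P)" using SC s by auto
        ultimately have "S \<union> {s} = S" using S unfolding maximal_def by blast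
        then show False using False by blast
      qed
    qed
  qed
  have spanEq: "span S = span (set (cols P))"
    using span_subsetI[OF SCv spanS] span_is_monotone[OF SC(1)] by blast
  obtain ws where ws: "distinct ws" "set ws = S" using finite_distinct_list[OF finS] by blast
  define us where "us = gram_schmidt n ws"
  have wsC: "set ws \<subseteq> carrier_vec n" using ws SCv by simp
  have gs: "span (set ws) = span (set us)" "corthogonal us" "set us \<subseteq> carrier_vec n"
       "length us = length ws" "distinct us"
    using cof_vec_space.gram_schmidt_result[OF wsC ws(1) _ us_def] SC(2) ws(2) by auto
  have lus: "length us = rank P" using gs(4) ws rk distinct_card by metis
  define vs where "vs = map (\<lambda>u. (1 / sqrt (u \<bullet> u)) \<cdot>\<^sub>v u) us"
  have lvs: "length vs = rank P" using lus vs_def by simp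
  have vsC: "set vs \<subseteq> carrier_vec n" using gs(3) vs_def by auto
  have vsi: "\<And>i. i < length vs \<Longrightarrow> vs ! i = (1 / sqrt (us!i \<bullet> us!i)) \<cdot>\<^sub>v us ! i"
    using vs_def by simp
  have usC: "\<And>i. i < length us \<Longrightarrow> us ! i \<in> carrier_vec n" using gs(3) by auto
  have orth: "\<And>i j. i < length us \<Longrightarrow> j < length us \<Longrightarrow> us!i \<bullet> us!j = 0 \<longleftrightarrow> i \<noteq> j"
  proof -
    fix i j assume "i < length us" "j < length us"
    then have "us!i \<bullet>c us!j = 0 \<longleftrightarrow> i \<noteq> j" using corthogonalD[OF gs(2)] by blast
    moreover have "us!i \<bullet>c us!j = us!i \<bullet> us!j" by (simp add: conjugate_vec_def scalar_prod_def)
    ultimately show "us!i \<bullet> us!j = 0 \<longleftrightarrow> i \<noteq> j" by simp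
  qed
  have pos: "\<And>i. i < length us \<Longrightarrow> us!i \<bullet> us!i > 0"
  proof -
    fix i assume i: "i < length us"
    have "us!i \<bullet> us!i \<ge> 0" unfolding scalar_prod_def by (intro sum_nonneg) auto
    moreover have "us!i \<bullet> us!i \<noteq> 0" using orth[OF i i] by simp
    ultimately show "us!i \<bullet> us!i > 0" by simp
  qed
  have onorm: "\<And>i j. i < length vs \<Longrightarrow> j < length vs \<Longrightarrow> vs!i \<bullet> vs!j = (if i = j then 1 else 0)"
  proof -
    fix i j assume i: "i < length vs" and j: "j < length vs"
    have i': "i < length us" and j': "j < length us" using i j vs_def by auto
    have "vs!i \<bullet> vs!j = (1 / sqrt (us!i \<bullet> us!i)) * (1 / sqrt (us!j \<bullet> us!j)) * (us!i \<bullet> us!j)"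
      using vsi[OF i] vsi[OF j] usC[OF i'] usC[OF j'] by simp
    moreover have "i = j \<Longrightarrow> (1 / sqrt (us!i \<bullet> us!i)) * (1 / sqrt (us!i \<bullet> us!i)) * (us!i \<bullet> us!i) = 1"
      using pos[OF i'] by (simp add: field_simps)
    ultimately show "vs!i \<bullet> vs!j = (if i = j then 1 else 0)" using orth[OF i' j'] by auto
  qed
  define U where "U = mat_of_cols n vs"
  have UC: "U \<in> carrier_mat n (rank P)" unfolding U_def lvs[symmetric] by simp
  have colU: "\<And>j. j < rank P \<Longrightarrow> col U j = vs ! j" using U_def lvs vsC by (metis col_mat_of_cols nth_mem subsetD)
  have UtU: "U\<^sup>T * U = 1\<^sub>m (rank P)"
    by (rule eq_matI) (use UC colU onorm lvs in auto)
  have Ut: "U\<^sup>T \<in> carrier_mat (rank P) n" using UC by simp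
  have vs_us: "set vs \<subseteq> span (set us)"
  proof
    fix v assume "v \<in> set vs"
    then obtain u where u: "u \<in> set us" "v = (1 / sqrt (u \<bullet> u)) \<cdot>\<^sub>v u" using vs_def by auto
    show "v \<in> span (set us)" unfolding u(2)
      by (rule smult_in_span[OF gs(3)]) (use in_own_span[OF gs(3)] u in blast)
  qed
  have us_vs: "set us \<subseteq> span (set vs)"
  proof
    fix u assume u: "u \<in> set us"
    then obtain i where i: "i < length us" "u = us ! i" by (metis in_set_conv_nth)
    have i': "i < length vs" using i vs_def by simp
    have "sqrt (u \<bullet> u) \<cdot>\<^sub>v vs ! i = u"
      using vsi[OF i'] i pos[OF i(1)] usC[OF i(1)] by (simp add: smult_smult_assoc)
    moreover have "vs ! i \<in> span (set vs)" using in_own_span[OF vsC] i' by auto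
    ultimately show "u \<in> span (set vs)" using smult_in_span[OF vsC] by metis
  qed
  have spEq: "span (set vs) = span (set (cols P))"
  proof -
    have "span (set vs) = span (set us)"
      using span_subsetI[OF gs(3) vs_us] span_subsetI[OF vsC us_vs] by (rule subset_antisym)
    then show ?thesis using gs(1) ws(2) spanEq by simp
  qed
  have fixU: "\<And>y. y \<in> span (set (cols P)) \<Longrightarrow> U * U\<^sup>T *\<^sub>v y = y"
  proof -
    fix y assume "y \<in> span (set (cols P))"
    then have "y \<in> col_space U" unfolding col_space_def U_def using vsC spEq by simp
    then obtain x where x: "x \<in> carrier_vec (rank P)" "y = U *\<^sub>v x"
      using col_space_eq[OF UC] UC by auto
    have "U * U\<^sup>T *\<^sub>v y = U *\<^sub>v ((U\<^sup>T * U) *\<^sub>v x)" using x UC Ut by simp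
    also have "\<dots> = y" using UtU x UC by simp
    finally show "U * U\<^sup>T *\<^sub>v y = y" .
  qed
  have fixP: "\<And>y. y \<in> span (set (cols P)) \<Longrightarrow> P *\<^sub>v y = y"
  proof -
    fix y assume "y \<in> span (set (cols P))"
    then have "y \<in> col_space P" unfolding col_space_def by simp
    then obtain x where x: "x \<in> carrier_vec n" "y = P *\<^sub>v x"
      using col_space_eq[OF P(1)] P(1) by auto
    have "P *\<^sub>v y = (P * P) *\<^sub>v x" using x P(1) by simp
    then show "P *\<^sub>v y = y" using P(2) x by simp
  qed
  have PU: "P * U = U"
  proof (rule mat_col_eqI)
    fix j assume j: "j < dim_col U"
    then have j': "j < rank P" using UC by simp
    have "col (P * U) j = P *\<^sub>v vs ! j" unfolding col_mult2[OF P(1) UC j'] colU[OF j'] by (rule refl)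
    also have "\<dots> = vs ! j"
    proof -
      have "vs ! j \<in> set vs" using j' lvs by simp
      then have "vs ! j \<in> span (set vs)" using in_own_span[OF vsC] by blast
      then have "vs ! j \<in> span (set (cols P))" using spEq by simp
      then show ?thesis by (rule fixP)
    qed
    finally show "col (P * U) j = col U j" using colU[OF j'] by simp
  qed (use P(1) UC in auto)
  have PiP: "U * U\<^sup>T * P = P"
  proof (rule mat_col_eqI)
    fix j assume j: "j < dim_col P"
    then have j': "j < n" using P(1) by simp
    have "col P j \<in> set (cols P)" using j by (metis cols_length cols_nth nth_mem)
    then have cP: "col P j \<in> span (set (cols P))" using in_own_span[OF colsC] by blast
    have "col (U * U\<^sup>T * P) j = U * U\<^sup>T *\<^sub>v col P j"
      using col_mult2[of "U * U\<^sup>T" n n P n j] UC Ut P(1) j' by simp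
    then show "col (U * U\<^sup>T * P) j = col P j" using fixU[OF cP] by simp
  qed (use P(1) UC in auto)
  have "P * (U * U\<^sup>T) = U * U\<^sup>T" using PU UC Ut P(1) by (metis assoc_mult_mat)
  moreover have "P * (U * U\<^sup>T) = P"
  proof -
    have "(U * U\<^sup>T * P)\<^sup>T = P\<^sup>T * (U * U\<^sup>T)\<^sup>T" using UC Ut P(1) by (metis mult_carrier_mat transpose_mult)
    also have "(U * U\<^sup>T)\<^sup>T = U * U\<^sup>T" using UC Ut by (metis transpose_mult transpose_transpose)
    finally show ?thesis using PiP P(3) by simp
  qed
  ultimately have "U * U\<^sup>T = P" by simp
  then show ?thesis using UC UtU by blast
qed

definition tr :: "real mat \<Rightarrow> real" where "tr A = (\<Sum>i<dim_row A. A $$ (i,i))"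

lemma tr_comm:
  fixes A B :: "real mat"
  assumes "A \<in> carrier_mat n m" "B \<in> carrier_mat m n"
  shows "tr (A * B) = tr (B * A)"
proof -
  have "tr (A * B) = (\<Sum>i<n. \<Sum>k<m. A $$ (i,k) * B $$ (k,i))"
    using assms unfolding tr_def by (simp add: scalar_prod_def lessThan_atLeast0)
  also have "\<dots> = (\<Sum>k<m. \<Sum>i<n. B $$ (k,i) * A $$ (i,k))"
    by (subst sum.swap) (simp add: mult.commute)
  also have "\<dots> = tr (B * A)"
    using assms unfolding tr_def by (simp add: scalar_prod_def lessThan_atLeast0)
  finally show ?thesis .
qed

lemma tr_one: "tr (1\<^sub>m n) = real n" unfolding tr_def by simp

lemma tr_smult: "A \<in> carrier_mat n n \<Longrightarrow> tr (c \<cdot>\<^sub>m A) = c * tr A" unfolding tr_def by (auto simp: sum_distrib_left intro!: sum.cong)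

lemma tr_minus: assumes "A \<in> carrier_mat n n" "B \<in> carrier_mat n n"
  shows "tr (A - B) = tr A - tr B"
  using assms unfolding tr_def by (simp add: sum_subtractf)

lemma orth_proj_rank_tr:
  assumes "orth_proj n P"
  shows "real (vec_space.rank n P) = tr P"
proof -
  obtain U where U: "U \<in> carrier_mat n (vec_space.rank n P)" "U\<^sup>T * U = 1\<^sub>m (vec_space.rank n P)"
    "U * U\<^sup>T = P" using orth_proj_factor[OF assms] by blast
  have "tr P = tr (U\<^sup>T * U)" using tr_comm[of U n _ "U\<^sup>T"] U by simp
  then show ?thesis using U(2) tr_one by simp
qed

definition msum :: "nat \<Rightarrow> nat \<Rightarrow> (nat \<Rightarrow> real mat) \<Rightarrow> nat \<Rightarrow> real mat" where
  "msum nr nc F K = mat nr nc (\<lambda>(a,b). \<Sum>i<K. F i $$ (a,b))"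

lemma msum_carrier[simp]: "msum nr nc F K \<in> carrier_mat nr nc"
  unfolding msum_def by simp

lemma msum_index[simp]: "a < nr \<Longrightarrow> b < nc \<Longrightarrow> msum nr nc F K $$ (a,b) = (\<Sum>i<K. F i $$ (a,b))"
  unfolding msum_def by simp

lemma msum_dims[simp]: "dim_row (msum nr nc F K) = nr" "dim_col (msum nr nc F K) = nc"
  unfolding msum_def by simp_all

lemma foldr_mat_index:
  fixes F :: "nat \<Rightarrow> real mat"
  assumes "\<forall>x\<in>set xs. F x \<in> carrier_mat n n" "Z \<in> carrier_mat n n"
  shows "foldr (+) (map F xs) Z \<in> carrier_mat n n \<and>
    (\<forall>a<n. \<forall>b<n. foldr (+) (map F xs) Z $$ (a,b) = (\<Sum>x\<leftarrow>xs. F x $$ (a,b)) + Z $$ (a,b))"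
  using assms by (induction xs) auto

lemma mat_sum_msum:
  assumes "\<forall>i<K. F i \<in> carrier_mat n n"
  shows "mat_sum n F K = msum n n F K"
proof -
  have "\<forall>x\<in>set [0..<K]. F x \<in> carrier_mat n n" using assms by simp
  from foldr_mat_index[OF this, of "0\<^sub>m n n"]
  have h: "mat_sum n F K \<in> carrier_mat n n"
     "\<forall>a<n. \<forall>b<n. mat_sum n F K $$ (a,b) = (\<Sum>x\<leftarrow>[0..<K]. F x $$ (a,b))"
    unfolding mat_sum_def by auto
  show ?thesis
    by (rule eq_matI) (use h in \<open>auto simp: sum_set_upt_conv_sum_list_nat[symmetric] lessThan_atLeast0\<close>)
qed

lemma msum_mult_left:
  assumes "A \<in> carrier_mat m nr" "\<forall>i<K. F i \<in> carrier_mat nr nc"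
  shows "A * msum nr nc F K = msum m nc (\<lambda>i. A * F i) K"
proof (rule eq_matI)
  fix a b assume ab: "a < dim_row (msum m nc (\<lambda>i. A * F i) K)" "b < dim_col (msum m nc (\<lambda>i. A * F i) K)"
  then have a: "a < m" and b: "b < nc" by auto
  have "(A * msum nr nc F K) $$ (a,b) = (\<Sum>k<nr. A $$ (a,k) * (\<Sum>i<K. F i $$ (k,b)))"
    using assms a b by (simp add: scalar_prod_def lessThan_atLeast0)
  also have "\<dots> = (\<Sum>i<K. \<Sum>k<nr. A $$ (a,k) * F i $$ (k,b))"
    by (simp add: sum_distrib_left) (rule sum.swap)
  also have "\<dots> = msum m nc (\<lambda>i. A * F i) K $$ (a,b)"
    using assms a b by (auto simp: scalar_prod_def lessThan_atLeast0 intro!: sum.cong)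
  finally show "(A * msum nr nc F K) $$ (a,b) = msum m nc (\<lambda>i. A * F i) K $$ (a,b)" .
qed (use assms in auto)

lemma msum_mult_right:
  assumes "B \<in> carrier_mat nc m" "\<forall>i<K. F i \<in> carrier_mat nr nc"
  shows "msum nr nc F K * B = msum nr m (\<lambda>i. F i * B) K"
proof (rule eq_matI)
  fix a b assume ab: "a < dim_row (msum nr m (\<lambda>i. F i * B) K)" "b < dim_col (msum nr m (\<lambda>i. F i * B) K)"
  then have a: "a < nr" and b: "b < m" by auto
  have "(msum nr nc F K * B) $$ (a,b) = (\<Sum>k<nc. (\<Sum>i<K. F i $$ (a,k)) * B $$ (k,b))"
    using assms a b by (simp add: scalar_prod_def lessThan_atLeast0)
  also have "\<dots> = (\<Sum>i<K. \<Sum>k<nc. F i $$ (a,k) * B $$ (k,b))"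
    by (simp add: sum_distrib_right) (rule sum.swap)
  also have "\<dots> = msum nr m (\<lambda>i. F i * B) K $$ (a,b)"
    using assms a b by (auto simp: scalar_prod_def lessThan_atLeast0 intro!: sum.cong)
  finally show "(msum nr nc F K * B) $$ (a,b) = msum nr m (\<lambda>i. F i * B) K $$ (a,b)" .
qed (use assms in auto)

lemma msum_transpose:
  assumes "\<forall>i<K. F i \<in> carrier_mat nr nc"
  shows "(msum nr nc F K)\<^sup>T = msum nc nr (\<lambda>i. (F i)\<^sup>T) K"
  by (rule eq_matI) (use assms in \<open>auto intro!: sum.cong\<close>)

lemma msum_single:
  assumes "j < K" "F j \<in> carrier_mat nr nc" "\<forall>i<K. i \<noteq> j \<longrightarrow> F i = 0\<^sub>m nr nc"
  shows "msum nr nc F K = F j"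
proof (rule eq_matI)
  fix a b assume "a < dim_row (F j)" "b < dim_col (F j)"
  then have a: "a < nr" and b: "b < nc" using assms by auto
  have "(\<Sum>i<K. F i $$ (a,b)) = (\<Sum>i<K. if i = j then F j $$ (a,b) else 0)"
    by (rule sum.cong) (use assms a b in auto)
  also have "\<dots> = F j $$ (a,b)" using assms(1) by simp
  finally have "(\<Sum>i<K. F i $$ (a,b)) = F j $$ (a,b)" .
  then show "msum nr nc F K $$ (a,b) = F j $$ (a,b)" using a b by simp
qed (use assms in auto)

lemma msum_cong:
  assumes "\<forall>i<K. F i = G i"
  shows "msum nr nc F K = msum nr nc G K"
  using assms unfolding msum_def by (auto intro!: cong_mat sum.cong)

lemma msum_smult:
  assumes "\<forall>i<K. F i \<in> carrier_mat nr nc"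
  shows "c \<cdot>\<^sub>m msum nr nc F K = msum nr nc (\<lambda>i. c \<cdot>\<^sub>m F i) K"
  by (rule eq_matI) (use assms in \<open>auto simp: sum_distrib_left intro!: sum.cong\<close>)

definition off :: "nat list \<Rightarrow> nat \<Rightarrow> nat" where "off Ls i = sum_list (take i Ls)"

definition Esel :: "nat list \<Rightarrow> nat \<Rightarrow> real mat" where
  "Esel Ls i = mat (sum_list Ls) (Ls ! i) (\<lambda>(a,b). if a = off Ls i + b then 1 else 0)"

lemma off_Suc: "i < length Ls \<Longrightarrow> off Ls (Suc i) = off Ls i + Ls ! i"
  unfolding off_def by (simp add: take_Suc_conv_app_nth)

lemma off_mono: "i \<le> j \<Longrightarrow> off Ls i \<le> off Ls j"
proof -
  assume "i \<le> j"
  then have "take j Ls = take i Ls @ take (j - i) (drop i Ls)"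
    by (metis le_add_diff_inverse take_add)
  then show ?thesis unfolding off_def by simp
qed

lemma off_len: "off Ls (length Ls) = sum_list Ls" unfolding off_def by simp

lemma off_le: "i < length Ls \<Longrightarrow> off Ls i + Ls ! i \<le> sum_list Ls"
  using off_Suc[of i Ls] off_mono[of "Suc i" "length Ls" Ls] off_len[of Ls] by simp

lemma Esel_carrier[simp]: "Esel Ls i \<in> carrier_mat (sum_list Ls) (Ls ! i)"
  unfolding Esel_def by simp

lemma Esel_dims[simp]: "dim_row (Esel Ls i) = sum_list Ls" "dim_col (Esel Ls i) = Ls ! i"
  unfolding Esel_def by simp_all

lemma Esel_index: "a < sum_list Ls \<Longrightarrow> b < Ls ! i \<Longrightarrow> Esel Ls i $$ (a,b) = (if a = off Ls i + b then 1 else 0)"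
  unfolding Esel_def by simp

lemma Esel_orth:
  assumes i: "i < length Ls" and j: "j < length Ls"
  shows "(Esel Ls i)\<^sup>T * Esel Ls j = (if i = j then 1\<^sub>m (Ls ! i) else 0\<^sub>m (Ls ! i) (Ls ! j))"
proof (rule eq_matI)
  fix b c assume bc: "b < dim_row (if i = j then 1\<^sub>m (Ls ! i) else 0\<^sub>m (Ls ! i) (Ls ! j))"
     "c < dim_col (if i = j then 1\<^sub>m (Ls ! i) else 0\<^sub>m (Ls ! i) (Ls ! j))"
  then have b: "b < Ls ! i" and c: "c < Ls ! j" by (auto split: if_splits)
  have bM: "off Ls i + b < sum_list Ls" using off_le[OF i] b by simp
  have "((Esel Ls i)\<^sup>T * Esel Ls j) $$ (b,c) =
      (\<Sum>a<sum_list Ls. Esel Ls i $$ (a,b) * Esel Ls j $$ (a,c))"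
    using b c by (simp add: scalar_prod_def lessThan_atLeast0)
  also have "\<dots> = (\<Sum>a<sum_list Ls. if a = off Ls i + b then (if off Ls i + b = off Ls j + c then 1 else 0) else 0)"
    by (rule sum.cong) (use b c in \<open>auto simp: Esel_index\<close>)
  also have "\<dots> = (if off Ls i + b = off Ls j + c then 1 else 0)" using bM by simp
  also have "\<dots> = (if i = j then 1\<^sub>m (Ls ! i) else 0\<^sub>m (Ls ! i) (Ls ! j)) $$ (b,c)"
  proof (cases "i = j")
    case True then show ?thesis using b c by auto
  next
    case False
    have "off Ls i + b \<noteq> off Ls j + c"
    proof (cases "i < j")
      case True
      then have "off Ls i + Ls ! i \<le> off Ls j" using off_Suc[OF i] off_mono[of "Suc i" j Ls] by simp
      then show ?thesis using b by simp
    next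
      case False
      then have "j < i" using \<open>i \<noteq> j\<close> by simp
      then have "off Ls j + Ls ! j \<le> off Ls i" using off_Suc[OF j] off_mono[of "Suc j" i Ls] by simp
      then show ?thesis using c by simp
    qed
    then show ?thesis using False b c by simp
  qed
  finally show "((Esel Ls i)\<^sup>T * Esel Ls j) $$ (b,c) = (if i = j then 1\<^sub>m (Ls ! i) else 0\<^sub>m (Ls ! i) (Ls ! j)) $$ (b,c)" .
qed (auto)

lemma off_count:
  "k \<le> length Ls \<Longrightarrow> (\<Sum>i<k. if off Ls i \<le> a \<and> a < off Ls (Suc i) then 1 else 0 :: real) = (if a < off Ls k then 1 else 0)"
proof (induction k)
  case 0 then show ?case by (simp add: off_def)
next
  case (Suc k)
  have "off Ls k \<le> off Ls (Suc k)" by (rule off_mono) simp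
  then show ?case using Suc by auto
qed

lemma Esel_sum:
  "msum (sum_list Ls) (sum_list Ls) (\<lambda>i. Esel Ls i * (Esel Ls i)\<^sup>T) (length Ls) = 1\<^sub>m (sum_list Ls)"
proof (rule eq_matI)
  fix a a' assume "a < dim_row (1\<^sub>m (sum_list Ls))" "a' < dim_col (1\<^sub>m (sum_list Ls))"
  then have a: "a < sum_list Ls" and a': "a' < sum_list Ls" by auto
  have inner: "(Esel Ls i * (Esel Ls i)\<^sup>T) $$ (a,a') =
     (if off Ls i \<le> a \<and> a < off Ls (Suc i) \<and> a = a' then 1 else 0)" if i: "i < length Ls" for i
  proof -
    have "(Esel Ls i * (Esel Ls i)\<^sup>T) $$ (a,a') = (\<Sum>b<Ls ! i. Esel Ls i $$ (a,b) * Esel Ls i $$ (a',b))"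
      using a a' by (simp add: scalar_prod_def lessThan_atLeast0)
    also have "\<dots> = (\<Sum>b<Ls ! i. if b = a - off Ls i then (if off Ls i \<le> a \<and> a = a' then 1 else 0) else 0)"
      by (rule sum.cong) (use a a' in \<open>auto simp: Esel_index\<close>)
    also have "\<dots> = (if off Ls i \<le> a \<and> a < off Ls (Suc i) \<and> a = a' then 1 else 0)"
      using off_Suc[OF i] by auto
    finally show ?thesis .
  qed
  have "msum (sum_list Ls) (sum_list Ls) (\<lambda>i. Esel Ls i * (Esel Ls i)\<^sup>T) (length Ls) $$ (a,a')
     = (\<Sum>i<length Ls. if off Ls i \<le> a \<and> a < off Ls (Suc i) \<and> a = a' then 1 else 0)"
    using a a' inner by simp
  also have "\<dots> = (if a = a' then (\<Sum>i<length Ls. if off Ls i \<le> a \<and> a < off Ls (Suc i) then 1 else 0) else 0)"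
    by auto
  also have "\<dots> = 1\<^sub>m (sum_list Ls) $$ (a,a')"
    using off_count[of "length Ls" Ls a] off_len[of Ls] a a' by (cases "a = a'") simp_all
  finally show "msum (sum_list Ls) (sum_list Ls) (\<lambda>i. Esel Ls i * (Esel Ls i)\<^sup>T) (length Ls) $$ (a,a') = 1\<^sub>m (sum_list Ls) $$ (a,a')" .
qed (auto)


lemma smult_smult_mat': "a \<cdot>\<^sub>m (b \<cdot>\<^sub>m (A :: real mat)) = (a * b) \<cdot>\<^sub>m A"
  by (rule eq_matI) auto

lemma transpose_smult': "(c \<cdot>\<^sub>m (A :: real mat))\<^sup>T = c \<cdot>\<^sub>m A\<^sup>T"
  by (rule eq_matI) auto

lemma minus_zero_mat': "(A :: real mat) \<in> carrier_mat n m \<Longrightarrow> A - 0\<^sub>m n m = A"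
  by (rule eq_matI) auto

theorem theorem2p6:
  fixes N :: nat and \<alpha> :: real and Ls :: "nat list"
  assumes "0 < N" and "1 < \<alpha>" and "Ls \<in> TFF \<alpha> N"
  shows "Ls \<in> TFF (\<alpha> / (\<alpha> - 1)) (sum_list Ls - N)"
proof -
  define K where "K = length Ls"
  define M where "M = sum_list Ls"
  from assms(3) have sorted: "sorted_wrt (\<ge>) Ls" and posL: "\<forall>L\<in>set Ls. 0 < L"
    and "\<exists>P. (\<forall>i<length Ls. orth_proj N (P i) \<and> vec_space.rank N (P i) = Ls ! i) \<and>
          mat_sum N P (length Ls) = \<alpha> \<cdot>\<^sub>m 1\<^sub>m N"
    unfolding TFF_def by auto
  then obtain P where P: "\<forall>i<K. orth_proj N (P i) \<and> vec_space.rank N (P i) = Ls ! i"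
     and Psum: "mat_sum N P K = \<alpha> \<cdot>\<^sub>m 1\<^sub>m N" unfolding K_def by blast
  have PC: "\<forall>i<K. P i \<in> carrier_mat N N" using P unfolding orth_proj_def by blast
  have "\<forall>i<K. \<exists>U. U \<in> carrier_mat N (Ls!i) \<and> (U\<^sup>T * U = 1\<^sub>m (Ls!i)) \<and> U * U\<^sup>T = P i"
    using orth_proj_factor P by metis
  then obtain U where U: "\<forall>i<K. U i \<in> carrier_mat N (Ls!i) \<and> (U i)\<^sup>T * U i = 1\<^sub>m (Ls!i) \<and> U i * (U i)\<^sup>T = P i"
    by metis
  define E where "E = Esel Ls"
  have EC: "\<And>i. E i \<in> carrier_mat M (Ls!i)" unfolding E_def M_def by simp
  have EtC: "\<And>i. (E i)\<^sup>T \<in> carrier_mat (Ls!i) M" using EC by simp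
  have EE: "\<And>i j. i < K \<Longrightarrow> j < K \<Longrightarrow> (E i)\<^sup>T * E j = (if i = j then 1\<^sub>m (Ls ! i) else 0\<^sub>m (Ls ! i) (Ls ! j))"
    unfolding E_def K_def by (rule Esel_orth)
  define V where "V = msum N M (\<lambda>i. U i * (E i)\<^sup>T) K"
  have VC: "V \<in> carrier_mat N M" unfolding V_def by simp
  have UEC: "\<forall>i<K. U i * (E i)\<^sup>T \<in> carrier_mat N M" using U EtC by (meson mult_carrier_mat)
  have VE: "V * E j = U j" if j: "j < K" for j
  proof -
    have "V * E j = msum N (Ls!j) (\<lambda>i. U i * (E i)\<^sup>T * E j) K"
      unfolding V_def by (rule msum_mult_right[OF EC UEC])
    also have "\<dots> = msum N (Ls!j) (\<lambda>i. if i = j then U j else 0\<^sub>m N (Ls!j)) K"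
    proof (rule msum_cong, intro allI impI)
      fix i assume i: "i < K"
      have Ui: "U i \<in> carrier_mat N (Ls!i)" using U i by simp
      have "U i * (E i)\<^sup>T * E j = U i * ((E i)\<^sup>T * E j)"
        using assoc_mult_mat[OF Ui EtC[of i] EC[of j]] .
      then show "U i * (E i)\<^sup>T * E j = (if i = j then U j else 0\<^sub>m N (Ls!j))"
        using EE[OF i j] U i by auto
    qed
    also have "\<dots> = U j"
      using msum_single[of j K "\<lambda>i. if i = j then U j else 0\<^sub>m N (Ls!j)" N "Ls!j"] j U by auto
    finally show ?thesis .
  qed
  have Vt: "V\<^sup>T = msum M N (\<lambda>i. E i * (U i)\<^sup>T) K"
  proof -
    have "V\<^sup>T = msum M N (\<lambda>i. (U i * (E i)\<^sup>T)\<^sup>T) K"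
      unfolding V_def by (rule msum_transpose[OF UEC])
    also have "\<dots> = msum M N (\<lambda>i. E i * (U i)\<^sup>T) K"
    proof (rule msum_cong, intro allI impI)
      fix i assume i: "i < K"
      show "(U i * (E i)\<^sup>T)\<^sup>T = E i * (U i)\<^sup>T"
        using transpose_mult[of "U i" N "Ls!i" "(E i)\<^sup>T" M] U i EtC by simp
    qed
    finally show ?thesis .
  qed
  have EUtC: "\<forall>i<K. E i * (U i)\<^sup>T \<in> carrier_mat M N"
  proof (intro allI impI)
    fix i assume i: "i < K"
    then have "(U i)\<^sup>T \<in> carrier_mat (Ls!i) N" using U by simp
    then show "E i * (U i)\<^sup>T \<in> carrier_mat M N" by (rule mult_carrier_mat[OF EC])
  qed
  have VVt: "V * V\<^sup>T = \<alpha> \<cdot>\<^sub>m 1\<^sub>m N"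
  proof -
    have "V * V\<^sup>T = msum N N (\<lambda>i. V * (E i * (U i)\<^sup>T)) K"
      unfolding Vt by (rule msum_mult_left[OF VC EUtC])
    also have "\<dots> = msum N N P K"
    proof (rule msum_cong, intro allI impI)
      fix i assume i: "i < K"
      have UiT: "(U i)\<^sup>T \<in> carrier_mat (Ls!i) N" using U i by simp
      have "V * (E i * (U i)\<^sup>T) = V * E i * (U i)\<^sup>T" using assoc_mult_mat[OF VC EC[of i] UiT] by simp
      then show "V * (E i * (U i)\<^sup>T) = P i" using VE[OF i] U i by simp
    qed
    also have "\<dots> = mat_sum N P K" using mat_sum_msum[OF PC] by simp
    finally show ?thesis using Psum by simp
  qed
  define G where "G = V\<^sup>T * V"
  have VtC: "V\<^sup>T \<in> carrier_mat M N" using VC by simp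
  have GC: "G \<in> carrier_mat M M" unfolding G_def using VC by simp
  have Gt: "G\<^sup>T = G" unfolding G_def using transpose_mult[OF VtC VC] by simp
  have GG: "G * G = \<alpha> \<cdot>\<^sub>m G"
  proof -
    have "G * G = V\<^sup>T * ((V * V\<^sup>T) * V)" unfolding G_def
      using assoc_mult_mat[OF VtC VC mult_carrier_mat[OF VtC VC]] assoc_mult_mat[OF VC VtC VC] by simp
    also have "\<dots> = \<alpha> \<cdot>\<^sub>m G" unfolding VVt G_def
      using mult_smult_assoc_mat[OF one_carrier_mat VC, of \<alpha>] mult_smult_distrib[OF VtC VC, of \<alpha>] VC by simp
    finally show ?thesis .
  qed
  define c where "c = 1 / \<alpha>"
  have ca: "c * c * \<alpha> = c" unfolding c_def using assms(2) by simp
  define Q where "Q = 1\<^sub>m M - c \<cdot>\<^sub>m G"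
  have cGC: "c \<cdot>\<^sub>m G \<in> carrier_mat M M" using GC by simp
  have QC: "Q \<in> carrier_mat M M" unfolding Q_def using minus_carrier_mat[OF cGC] by simp
  have Qt: "Q\<^sup>T = Q" unfolding Q_def using transpose_minus[OF one_carrier_mat cGC] Gt
    by (simp add: transpose_smult')
  have QQ: "Q * Q = Q"
  proof -
    have cGcG: "(c \<cdot>\<^sub>m G) * (c \<cdot>\<^sub>m G) = c \<cdot>\<^sub>m G"
    proof -
      have "(c \<cdot>\<^sub>m G) * (c \<cdot>\<^sub>m G) = c \<cdot>\<^sub>m (c \<cdot>\<^sub>m (G * G))"
        using mult_smult_assoc_mat[OF GC cGC, of c] mult_smult_distrib[OF GC GC, of c] by simp
      also have "\<dots> = (c * c * \<alpha>) \<cdot>\<^sub>m G" unfolding GG smult_smult_mat' by (simp add: mult.assoc)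
      finally show ?thesis using ca by simp
    qed
    have "(c \<cdot>\<^sub>m G) * Q = c \<cdot>\<^sub>m G - (c \<cdot>\<^sub>m G) * (c \<cdot>\<^sub>m G)"
      unfolding Q_def using mult_minus_distrib_mat[OF cGC one_carrier_mat cGC] right_mult_one_mat[OF cGC] by simp
    also have "\<dots> = 0\<^sub>m M M" using cGcG cGC by simp
    finally have 0: "(c \<cdot>\<^sub>m G) * Q = 0\<^sub>m M M" .
    have "Q * Q = 1\<^sub>m M * Q - (c \<cdot>\<^sub>m G) * Q"
      unfolding Q_def[of] by (rule minus_mult_distrib_mat[OF one_carrier_mat cGC QC[unfolded Q_def]])
    then show ?thesis using 0 minus_zero_mat'[OF QC] left_mult_one_mat[OF QC] by simp
  qed
  have Qproj: "orth_proj M Q" unfolding orth_proj_def using QC QQ Qt by simp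
  define r where "r = vec_space.rank M Q"
  obtain W where W: "W \<in> carrier_mat M r" "W\<^sup>T * W = 1\<^sub>m r" "W * W\<^sup>T = Q"
    using orth_proj_factor[OF Qproj] unfolding r_def by blast
  have trG: "tr G = \<alpha> * real N"
  proof -
    have "tr G = tr (V * V\<^sup>T)" unfolding G_def by (rule tr_comm[OF VtC VC])
    also have "\<dots> = \<alpha> * real N" unfolding VVt tr_smult[OF one_carrier_mat] tr_one ..
    finally show ?thesis .
  qed
  have trQ: "tr Q = real M - real N"
  proof -
    have "tr Q = tr (1\<^sub>m M) - tr (c \<cdot>\<^sub>m G)" unfolding Q_def by (rule tr_minus[OF one_carrier_mat cGC])
    also have "\<dots> = real M - c * (\<alpha> * real N)" unfolding tr_one tr_smult[OF GC] trG ..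
    also have "\<dots> = real M - real N" unfolding c_def using assms(2) by simp
    finally show ?thesis .
  qed
  have rr: "real r = real M - real N" using orth_proj_rank_tr[OF Qproj] trQ unfolding r_def by simp
  then have NM: "N \<le> M" and rMN: "r = M - N" by linarith+
  define Wi where "Wi i = (E i)\<^sup>T * W" for i
  have WiC: "\<And>i. Wi i \<in> carrier_mat (Ls!i) r" unfolding Wi_def using EtC W(1) by (meson mult_carrier_mat)
  have WitC: "\<And>i. (Wi i)\<^sup>T \<in> carrier_mat r (Ls!i)" using WiC by simp
  have WtC: "W\<^sup>T \<in> carrier_mat r M" using W(1) by simp
  have WiWit: "Wi i * (Wi i)\<^sup>T = (1 - c) \<cdot>\<^sub>m 1\<^sub>m (Ls!i)" if i: "i < K" for i
  proof -
    have Ui: "U i \<in> carrier_mat N (Ls!i)" "(U i)\<^sup>T * U i = 1\<^sub>m (Ls!i)" using U i by auto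
    have "(Wi i)\<^sup>T = W\<^sup>T * E i" unfolding Wi_def using transpose_mult[OF EtC W(1)] by simp
    then have "Wi i * (Wi i)\<^sup>T = (E i)\<^sup>T * (W * W\<^sup>T) * E i" unfolding Wi_def
      using assoc_mult_mat[OF EtC W(1) WtC] assoc_mult_mat[OF mult_carrier_mat[OF EtC W(1)] WtC EC] by simp
    also have "\<dots> = (E i)\<^sup>T * Q * E i" using W(3) by simp
    also have "\<dots> = (E i)\<^sup>T * E i - c \<cdot>\<^sub>m ((V * E i)\<^sup>T * (V * E i))"
    proof -
      have "(E i)\<^sup>T * Q = (E i)\<^sup>T - c \<cdot>\<^sub>m ((E i)\<^sup>T * G)"
        unfolding Q_def using mult_minus_distrib_mat[OF EtC one_carrier_mat cGC] right_mult_one_mat[OF EtC]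
          mult_smult_distrib[OF EtC GC] by simp
      then have "(E i)\<^sup>T * Q * E i = (E i)\<^sup>T * E i - c \<cdot>\<^sub>m ((E i)\<^sup>T * G * E i)"
        using minus_mult_distrib_mat[OF EtC smult_carrier_mat[OF mult_carrier_mat[OF EtC GC]] EC]
          mult_smult_assoc_mat[OF mult_carrier_mat[OF EtC GC] EC] by simp
      moreover have "(E i)\<^sup>T * G * E i = (V * E i)\<^sup>T * (V * E i)"
        unfolding G_def using transpose_mult[OF VC EC] assoc_mult_mat[OF EtC VtC VC]
          assoc_mult_mat[OF EtC mult_carrier_mat[OF VtC VC] EC] assoc_mult_mat[OF VtC VC EC]
          assoc_mult_mat[OF mult_carrier_mat[OF EtC VtC] VC EC] by simp
      ultimately show ?thesis by simp
    qed
    also have "\<dots> = 1\<^sub>m (Ls!i) - c \<cdot>\<^sub>m 1\<^sub>m (Ls!i)" using VE[OF i] EE[OF i i] Ui by simp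
    also have "\<dots> = (1 - c) \<cdot>\<^sub>m 1\<^sub>m (Ls!i)" by (rule eq_matI) auto
    finally show ?thesis .
  qed
  define d where "d = \<alpha> / (\<alpha> - 1)"
  have dc: "d * (1 - c) = 1" unfolding d_def c_def using assms(2) by (simp add: field_simps)
  define R where "R i = d \<cdot>\<^sub>m ((Wi i)\<^sup>T * Wi i)" for i
  have WWC: "\<And>i. (Wi i)\<^sup>T * Wi i \<in> carrier_mat r r" using WitC WiC by (meson mult_carrier_mat)
  have RC: "\<And>i. R i \<in> carrier_mat r r" unfolding R_def using WWC by simp
  have Rt: "\<And>i. (R i)\<^sup>T = R i" unfolding R_def transpose_smult'
    using transpose_mult[OF WitC WiC] by simp
  have RR: "R i * R i = R i" if i: "i < K" for i
  proof -
    have "((Wi i)\<^sup>T * Wi i) * ((Wi i)\<^sup>T * Wi i) = (Wi i)\<^sup>T * ((Wi i * (Wi i)\<^sup>T) * Wi i)"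
      using assoc_mult_mat[OF WitC WiC WWC] assoc_mult_mat[OF WiC WitC WiC] by simp
    also have "\<dots> = (1 - c) \<cdot>\<^sub>m ((Wi i)\<^sup>T * Wi i)" unfolding WiWit[OF i]
      using mult_smult_assoc_mat[OF one_carrier_mat WiC] mult_smult_distrib[OF WitC WiC] left_mult_one_mat[OF WiC] by simp
    finally have h: "((Wi i)\<^sup>T * Wi i) * ((Wi i)\<^sup>T * Wi i) = (1 - c) \<cdot>\<^sub>m ((Wi i)\<^sup>T * Wi i)" .
    have "R i * R i = d \<cdot>\<^sub>m (d \<cdot>\<^sub>m (((Wi i)\<^sup>T * Wi i) * ((Wi i)\<^sup>T * Wi i)))" unfolding R_def
      using mult_smult_assoc_mat[OF WWC smult_carrier_mat[OF WWC]] mult_smult_distrib[OF WWC WWC] by simp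
    also have "\<dots> = (d * (d * (1 - c))) \<cdot>\<^sub>m ((Wi i)\<^sup>T * Wi i)" unfolding h smult_smult_mat' ..
    also have "\<dots> = R i" unfolding R_def dc by simp
    finally show ?thesis .
  qed
  have Rproj: "\<And>i. i < K \<Longrightarrow> orth_proj r (R i)" unfolding orth_proj_def using RC Rt RR by blast
  have Rrank: "vec_space.rank r (R i) = Ls ! i" if i: "i < K" for i
  proof -
    have "real (vec_space.rank r (R i)) = tr (R i)" by (rule orth_proj_rank_tr[OF Rproj[OF i]])
    also have "\<dots> = d * tr (Wi i * (Wi i)\<^sup>T)" unfolding R_def tr_smult[OF WWC] tr_comm[OF WitC WiC] ..
    also have "\<dots> = real (Ls ! i)" unfolding WiWit[OF i] tr_smult[OF one_carrier_mat] tr_one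
      using dc by (simp add: mult.assoc[symmetric])
    finally show ?thesis by simp
  qed
  have Rsum: "mat_sum r R K = d \<cdot>\<^sub>m 1\<^sub>m r"
  proof -
    have FC: "\<forall>i<K. E i * (E i)\<^sup>T \<in> carrier_mat M M" using EC EtC by (meson mult_carrier_mat)
    have F2C: "\<forall>i<K. W\<^sup>T * (E i * (E i)\<^sup>T) \<in> carrier_mat r M"
      using FC WtC by (meson mult_carrier_mat)
    have "mat_sum r R K = msum r r R K" using mat_sum_msum RC by blast
    also have "\<dots> = msum r r (\<lambda>i. d \<cdot>\<^sub>m (W\<^sup>T * (E i * (E i)\<^sup>T) * W)) K"
    proof (rule msum_cong, intro allI impI)
      fix i assume i: "i < K"
      have "(Wi i)\<^sup>T = W\<^sup>T * E i" unfolding Wi_def using transpose_mult[OF EtC W(1)] by simp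
      then show "R i = d \<cdot>\<^sub>m (W\<^sup>T * (E i * (E i)\<^sup>T) * W)" unfolding R_def Wi_def
        using assoc_mult_mat[OF WtC EC EtC] assoc_mult_mat[OF mult_carrier_mat[OF WtC EC] EtC W(1)] by simp
    qed
    also have "\<dots> = d \<cdot>\<^sub>m msum r r (\<lambda>i. W\<^sup>T * (E i * (E i)\<^sup>T) * W) K"
      by (rule msum_smult[symmetric]) (use F2C W(1) in \<open>meson mult_carrier_mat\<close>)
    also have "msum r r (\<lambda>i. W\<^sup>T * (E i * (E i)\<^sup>T) * W) K = msum r M (\<lambda>i. W\<^sup>T * (E i * (E i)\<^sup>T)) K * W"
      by (rule msum_mult_right[symmetric, OF W(1) F2C])
    also have "msum r M (\<lambda>i. W\<^sup>T * (E i * (E i)\<^sup>T)) K = W\<^sup>T * msum M M (\<lambda>i. E i * (E i)\<^sup>T) K"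
      by (rule msum_mult_left[symmetric, OF WtC FC])
    also have "msum M M (\<lambda>i. E i * (E i)\<^sup>T) K = 1\<^sub>m M"
      unfolding E_def M_def K_def by (rule Esel_sum)
    finally show ?thesis using W(1,2) right_mult_one_mat[OF WtC] by simp
  qed
  show ?thesis unfolding TFF_def
  proof (intro CollectI conjI exI)
    show "sorted_wrt (\<ge>) Ls" by (rule sorted)
    show "\<forall>L\<in>set Ls. 0 < L" by (rule posL)
    show "\<forall>i<length Ls. orth_proj (sum_list Ls - N) (R i) \<and> vec_space.rank (sum_list Ls - N) (R i) = Ls ! i"
      using Rproj Rrank rMN unfolding K_def M_def by simp
    show "mat_sum (sum_list Ls - N) R (length Ls) = \<alpha> / (\<alpha> - 1) \<cdot>\<^sub>m 1\<^sub>m (sum_list Ls - N)"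
      using Rsum rMN unfolding K_def M_def d_def by simp
  qed
qed
end
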